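(* Let $d\ge k\ge 0$ be integers. Then $\frac{k+1}{d+k+1}\le f(k,d)\le \frac{k+1}{d+1}$.
   Context: For a graph $G=(V,E)$ and an integer $k\ge 0$, a $k$-independent set is a set $S\subseteq V$ such that the induced subgraph $G[S]$ has maximum degree at most $k$; $\alpha_k(G)$ denotes the maximum cardinality of a $k$-independent set of $G$. $n(G)$ is the number of vertices and $d(G)=2|E(G)|/n(G)$ the average degree. For integers $d,k\ge 0$, $f(k,d)=\inf\left\{\frac{\alpha_k(G)}{n(G)} : G \text{ a finite simple graph with at least one vertex and } d(G)\le d\right\}$. *)

theory Defs
  imports Complex_Main
begin

text \<open>Every finite simple graph
  is isomorphic to one of this form, and all quantities below are
  isomorphism invariant.\<close>

definition simple_graph :: "nat set \<Rightarrow> nat set set \<Rightarrow> bool" where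
  "simple_graph V E \<longleftrightarrow> finite V \<and> (\<forall>e\<in>E. e \<subseteq> V \<and> card e = 2)"

definition k_independent :: "nat set \<Rightarrow> nat set set \<Rightarrow> nat \<Rightarrow> nat set \<Rightarrow> bool" where
  "k_independent V E k S \<longleftrightarrow>
     S \<subseteq> V \<and> (\<forall>u\<in>S. card {v\<in>S. {u, v} \<in> E} \<le> k)"

definition alpha_k :: "nat \<Rightarrow> nat set \<Rightarrow> nat set set \<Rightarrow> nat" where
  "alpha_k k V E = Max {card S | S. k_independent V E k S}"

definition avg_degree :: "nat set \<Rightarrow> nat set set \<Rightarrow> real" where
  "avg_degree V E = 2 * real (card E) / real (card V)"

definition f_kd :: "nat \<Rightarrow> nat \<Rightarrow> real" where
  "f_kd k d = Inf {real (alpha_k k V E) / real (card V) | V E.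
                    simple_graph V E \<and> V \<noteq> {} \<and> avg_degree V E \<le> real d}"

end

theory Submission
  imports Defs
begin

lemma card2_elem: assumes "card e = 2" "u \<in> e" shows "\<exists>v. v \<noteq> u \<and> e = {u,v}"
proof -
  from assms(1) obtain x y where "e = {x,y}" "x \<noteq> y" by (auto simp: card_2_iff)
  with assms(2) show ?thesis by auto
qed

definition dg :: "nat set set \<Rightarrow> nat set \<Rightarrow> nat \<Rightarrow> nat" where
  "dg E S u = card {v\<in>S. {u,v}\<in>E}"
definition eS :: "nat set set \<Rightarrow> nat set \<Rightarrow> nat" where
  "eS E S = card {e\<in>E. e \<subseteq> S}"

lemma eS_insert:
  assumes fin: "finite S" and finE: "finite E" and E2: "\<forall>e\<in>E. card e = 2" and u: "u \<notin> S"
  shows "eS E (insert u S) = eS E S + dg E S u"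
proof -
  let ?A = "{e\<in>E. e \<subseteq> S}"
  let ?B = "(\<lambda>v. {u,v}) ` {v\<in>S. {u,v}\<in>E}"
  have eq: "{e\<in>E. e \<subseteq> insert u S} = ?A \<union> ?B"
  proof
    show "{e\<in>E. e \<subseteq> insert u S} \<subseteq> ?A \<union> ?B"
    proof
      fix e assume e: "e \<in> {e\<in>E. e \<subseteq> insert u S}"
      show "e \<in> ?A \<union> ?B"
      proof (cases "u \<in> e")
        case True
        from e E2 have "card e = 2" by auto
        from card2_elem[OF this True] obtain v where "v \<noteq> u" "e = {u,v}" by blast
        with e show ?thesis by auto
      next
        case False with e show ?thesis by auto
      qed
    qed
  next
    show "?A \<union> ?B \<subseteq> {e\<in>E. e \<subseteq> insert u S}" by auto
  qed
  have disj: "?A \<inter> ?B = {}" using u by auto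
  have inj: "inj_on (\<lambda>v. {u,v}) {v\<in>S. {u,v}\<in>E}" using u by (auto simp: inj_on_def doubleton_eq_iff)
  have "card ({e\<in>E. e \<subseteq> insert u S}) = card ?A + card ?B"
    unfolding eq by (rule card_Un_disjoint) (use finE fin disj in auto)
  also have "card ?B = dg E S u" unfolding dg_def using inj by (simp add: card_image)
  finally show ?thesis unfolding eS_def .
qed

lemma dg_remove:
  assumes E2: "\<forall>e\<in>E. card e = 2"
  shows "dg E (S - {v}) v = dg E S v"
proof -
  have "{w\<in>S - {v}. {v,w}\<in>E} = {w\<in>S. {v,w}\<in>E}" using E2 by fastforce
  then show ?thesis unfolding dg_def by simp
qed

lemma favaron:
  assumes sg: "simple_graph V E" and ne: "V \<noteq> {}"
  shows "\<exists>S. S \<subseteq> V \<and> S \<noteq> {} \<and> (\<forall>u\<in>S. dg E S u \<le> k) \<and> (\<forall>u\<in>V-S. k+1 \<le> dg E S u)"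
proof -
  have finV: "finite V" using sg simple_graph_def by auto
  have EP: "E \<subseteq> Pow V" using sg simple_graph_def by auto
  have finE: "finite E" using finite_subset[OF EP] finV by auto
  have E2: "\<forall>e\<in>E. card e = 2" using sg simple_graph_def by auto
  define n where "n = card V"
  have n1: "n \<ge> 1" using ne finV n_def by (simp add: Suc_leI card_gt_0_iff)
  define \<Phi> where "\<Phi> S = int (n+1) * (int (k+1) * int (card S) - int (eS E S)) - int (card S)" for S
  have "finite (\<Phi> ` Pow V)" "\<Phi> ` Pow V \<noteq> {}" using finV by auto
  then have "Max (\<Phi> ` Pow V) \<in> \<Phi> ` Pow V" by (rule Max_in)
  then obtain S where SP: "S \<subseteq> V" and Smax0: "\<Phi> S = Max (\<Phi> ` Pow V)" by auto
  have Smax: "\<Phi> T \<le> \<Phi> S" if "T \<subseteq> V" for T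
    unfolding Smax0 using that finV by (intro Max_ge) auto
  have finS: "finite S" using SP finV finite_subset by auto
  have inS: "dg E S u \<le> k" if u: "u \<in> S" for u
  proof -
    define T where "T = S - {u}"
    have ST: "S = insert u T" "u \<notin> T" using u T_def by auto
    have finT: "finite T" using finS T_def by auto
    have dT: "dg E T u = dg E S u" unfolding T_def by (rule dg_remove[OF E2])
    have e0: "eS E (insert u T) = eS E T + dg E T u" by (rule eS_insert[OF finT finE E2 ST(2)])
    have e1: "eS E S = eS E T + dg E S u" using e0 dT ST(1) by metis
    have c1: "card S = card T + 1" using ST finT by (metis Suc_eq_plus1 card_insert_disjoint)
    have "T \<subseteq> V" using SP T_def by auto
    then have "\<Phi> T \<le> \<Phi> S" by (rule Smax)
    then have "int (n+1) * (int (k+1) - int (dg E S u)) \<ge> 1"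
      unfolding \<Phi>_def e1 c1 by (simp add: algebra_simps)
    then have "0 < int (n+1) * (int (k+1) - int (dg E S u))" by linarith
    then have "0 < int (k+1) - int (dg E S u)" by (simp add: zero_less_mult_iff)
    then show ?thesis by linarith
  qed
  have outS: "k+1 \<le> dg E S u" if u: "u \<in> V - S" for u
  proof -
    define T where "T = insert u S"
    have uS: "u \<notin> S" using u by auto
    have e1: "eS E T = eS E S + dg E S u" using eS_insert[OF finS finE E2 uS] T_def by simp
    have c1: "card T = card S + 1" using uS finS T_def by simp
    have "T \<subseteq> V" using SP T_def u by auto
    then have "\<Phi> T \<le> \<Phi> S" by (rule Smax)
    then have h: "int (n+1) * (int (k+1) - int (dg E S u)) \<le> 1"
      unfolding \<Phi>_def e1 c1 by (simp add: algebra_simps)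
    show ?thesis
    proof (rule ccontr)
      assume "\<not> k+1 \<le> dg E S u"
      then have h1: "1 \<le> int (k+1) - int (dg E S u)" by linarith
      have "int (n+1) \<le> int (n+1) * (int (k+1) - int (dg E S u))"
        using mult_left_mono[OF h1, of "int (n+1)"] by simp
      moreover have "int (n+1) \<ge> 2" using n1 by simp
      ultimately show False using h by linarith
    qed
  qed
  have Sne: "S \<noteq> {}"
  proof
    assume S0: "S = {}"
    obtain v where v: "v \<in> V" using ne by auto
    have "eS E {v} = 0" unfolding eS_def
    proof -
      have "{e\<in>E. e \<subseteq> {v}} = {}"
      proof (rule ccontr)
        assume "{e\<in>E. e \<subseteq> {v}} \<noteq> {}"
        then obtain e where "e \<in> E" "e \<subseteq> {v}" by auto
        then have "card e \<le> 1" using card_mono[of "{v}" e] by auto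
        with E2 \<open>e \<in> E\<close> show False by auto
      qed
      then show "card {e\<in>E. e \<subseteq> {v}} = 0" by simp
    qed
    then have "\<Phi> {v} = int (n+1) * int (k+1) - 1" unfolding \<Phi>_def by simp
    moreover have "{e\<in>E. e \<subseteq> {}} = {}" using E2 by fastforce
    then have "\<Phi> S = 0" unfolding \<Phi>_def S0 eS_def by simp
    moreover have "\<Phi> {v} \<le> \<Phi> S" using Smax v by auto
    moreover have "int (n+1) * int (k+1) \<ge> 2 * 1" using n1 by (intro mult_mono) auto
    ultimately show False by linarith
  qed
  show ?thesis using SP Sne inS outS by blast
qed


lemma edge_count:
  assumes sg: "simple_graph V E" and SV: "S \<subseteq> V"
  shows "card {e\<in>E. e \<subseteq> V - S} + (\<Sum>u\<in>V-S. dg E S u) \<le> card E"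
proof -
  have finV: "finite V" using sg simple_graph_def by auto
  have EP: "E \<subseteq> Pow V" using sg simple_graph_def by auto
  have finE: "finite E" using finite_subset[OF EP] finV by auto
  define R where "R = V - S"
  have finR: "finite R" using finV R_def by auto
  have finS: "finite S" using finV SV finite_subset by auto
  let ?A = "{e\<in>E. e \<subseteq> R}"
  let ?Sg = "Sigma R (\<lambda>u. {v\<in>S. {u,v}\<in>E})"
  let ?B = "(\<lambda>(u,v). {u,v}) ` ?Sg"
  have BE: "?B \<subseteq> E" by auto
  have disj: "?A \<inter> ?B = {}" using R_def by auto
  have inj: "inj_on (\<lambda>(u,v). {u,v}) ?Sg"
    unfolding inj_on_def using R_def by (auto simp: doubleton_eq_iff)
  have cSg: "card ?Sg = (\<Sum>u\<in>R. dg E S u)"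
    unfolding dg_def using finR finS by (subst card_SigmaI) auto
  have "card (?A \<union> ?B) = card ?A + card ?B"
    by (rule card_Un_disjoint) (use finE BE disj in \<open>auto intro: finite_subset\<close>)
  also have "card ?B = card ?Sg" using inj by (rule card_image)
  finally have "card ?A + (\<Sum>u\<in>R. dg E S u) = card (?A \<union> ?B)" using cSg by simp
  also have "\<dots> \<le> card E" using BE finE by (intro card_mono) auto
  finally show ?thesis unfolding R_def .
qed

lemma arith_key:
  fixes a s r eR m s' :: real
  assumes a: "a > 0" and s: "s \<ge> 0" and r: "r \<ge> 0" and eR: "eR \<ge> 0" and m: "m \<ge> eR + a*r"
    and s': "s' \<ge> 0" and IH: "a*r^2 \<le> s'*(2*eR + a*r)"
  shows "a*(s+r)^2 \<le> s*(2*m + a*(s+r)) \<or> a*(s+r)^2 \<le> s'*(2*m + a*(s+r))"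
proof (cases "2*eR*s \<ge> a*r*(r-s)")
  case True
  have "s*(2*eR + 2*a*r + a*(s+r)) \<le> s*(2*m + a*(s+r))" using m s by (intro mult_left_mono) auto
  moreover have "s*(2*eR + 2*a*r + a*(s+r)) - a*(s+r)^2 = 2*eR*s - a*r*(r-s)"
    by (simp add: algebra_simps power2_eq_square)
  ultimately show ?thesis using True by linarith
next
  case False
  then have "2*eR*s < a*r*(r-s)" by linarith
  have rpos: "r > 0"
  proof (rule ccontr)
    assume "\<not> r > 0" then have "r = 0" using r by linarith
    with \<open>2*eR*s < a*r*(r-s)\<close> eR s show False by (simp add: zero_le_mult_iff) (smt (verit) mult_nonneg_nonneg)
  qed
  define Y where "Y = 2*eR + a*r"
  define X where "X = 2*eR + 2*a*r + a*(s+r)"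
  have Ypos: "Y > 0" unfolding Y_def using a rpos eR by (simp add: add_nonneg_pos)
  have Xnn: "X \<ge> 0" unfolding X_def using a r s eR by simp
  have key: "a*r^2*X - a*(s+r)^2*Y = a*(r+(s+r))*(a*r*(r-s) - 2*eR*s)"
    unfolding X_def Y_def by (simp add: algebra_simps power2_eq_square)
  have "0 \<le> a*(r+(s+r))*(a*r*(r-s) - 2*eR*s)"
    using a r s \<open>2*eR*s < a*r*(r-s)\<close> by (intro mult_nonneg_nonneg) auto
  then have k1: "a*(s+r)^2*Y \<le> a*r^2*X" using key by linarith
  have "a*r^2*X \<le> s'*Y*X" using IH Xnn unfolding Y_def by (intro mult_right_mono) auto
  with k1 have "a*(s+r)^2*Y \<le> (s'*X)*Y" by (simp add: algebra_simps)
  then have k2: "a*(s+r)^2 \<le> s'*X" using Ypos by simp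
  have "s'*X \<le> s'*(2*m + a*(s+r))" unfolding X_def using m s' by (intro mult_left_mono) auto
  with k2 show ?thesis by linarith
qed


lemma main_bound:
  assumes "finite V" "simple_graph V E"
  shows "\<exists>S. k_independent V E k S \<and>
     real (k+1) * real (card V)^2 \<le> real (card S) * (2 * real (card E) + real (k+1) * real (card V))"
  using assms
proof (induction "card V" arbitrary: V E rule: less_induct)
  case less
  show ?case
  proof (cases "V = {}")
    case True
    have "k_independent V E k {}" unfolding k_independent_def by simp
    then show ?thesis using True by (intro exI[of _ "{}"]) simp
  next
    case False
    obtain S where SV: "S \<subseteq> V" and Sne: "S \<noteq> {}" and inS: "\<forall>u\<in>S. dg E S u \<le> k"
      and outS: "\<forall>u\<in>V-S. k+1 \<le> dg E S u"
      using favaron[OF less.prems(2) False, of k] by blast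
    define R where "R = V - S"
    define E' where "E' = {e\<in>E. e \<subseteq> R}"
    have sgR: "simple_graph R E'" using less.prems unfolding simple_graph_def R_def E'_def by auto
    have finR: "finite R" using less.prems R_def by auto
    have "R \<subset> V" using SV Sne R_def by auto
    then have cR: "card R < card V" using less.prems(1) by (simp add: psubset_card_mono)
    obtain S' where kS'R: "k_independent R E' k S'" and IH:
      "real (k+1) * real (card R)^2 \<le> real (card S') * (2 * real (card E') + real (k+1) * real (card R))"
      using less.hyps[OF cR finR sgR] by blast
    have kS: "k_independent V E k S" using SV inS unfolding k_independent_def dg_def by auto
    have kS': "k_independent V E k S'"
    proof -
      have S'R: "S' \<subseteq> R" using kS'R k_independent_def by auto
      have "{v\<in>S'. {u,v}\<in>E} = {v\<in>S'. {u,v}\<in>E'}" if "u \<in> S'" for u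
        using that S'R unfolding E'_def by auto
      then show ?thesis using kS'R S'R R_def unfolding k_independent_def by auto
    qed
    have ec: "card E' + (\<Sum>u\<in>R. dg E S u) \<le> card E"
      using edge_count[OF less.prems(2) SV] unfolding E'_def R_def .
    have h: "card R * (k+1) \<le> (\<Sum>u\<in>R. dg E S u)"
      using sum_bounded_below[of R "k+1" "dg E S"] outS R_def by auto
    have "card E' + (k+1)*card R \<le> card E' + (\<Sum>u\<in>R. dg E S u)" using h by (simp add: mult.commute)
    then have nat: "card E' + (k+1)*card R \<le> card E" using ec by (rule le_trans)
    have "real (card E' + (k+1)*card R) \<le> real (card E)" using nat by (simp only: of_nat_le_iff)
    then have ec2: "real (card E') + real (k+1) * real (card R) \<le> real (card E)"
      by (simp only: of_nat_add of_nat_mult)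
    have VSR: "V = S \<union> R" using SV R_def by auto
    have finS: "finite S" using SV less.prems(1) finite_subset by auto
    have cV: "card V = card S + card R"
      unfolding VSR by (rule card_Un_disjoint) (use finS finR R_def in auto)
    have ak: "real (k+1) * (real (card S) + real (card R))^2 \<le> real (card S) * (2 * real (card E) + real (k+1) * (real (card S) + real (card R)))
        \<or> real (k+1) * (real (card S) + real (card R))^2 \<le> real (card S') * (2 * real (card E) + real (k+1) * (real (card S) + real (card R)))"
      by (rule arith_key) (use ec2 IH in auto)
    then show ?thesis using kS kS' cV by (auto simp del: of_nat_add simp: of_nat_add[symmetric])
  qed
qed


lemma alpha_ge:
  assumes "finite V" "k_independent V E k S"
  shows "card S \<le> alpha_k k V E"
proof -
  have sub: "{card S |S. k_independent V E k S} \<subseteq> {..card V}"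
    using assms(1) by (auto simp: k_independent_def intro: card_mono)
  have "finite {card S |S. k_independent V E k S}" using finite_subset[OF sub] by auto
  then show ?thesis unfolding alpha_k_def using assms(2) by (intro Max_ge) auto
qed

lemma alpha_in:
  assumes "finite V"
  shows "\<exists>S. k_independent V E k S \<and> alpha_k k V E = card S"
proof -
  have sub: "{card S |S. k_independent V E k S} \<subseteq> {..card V}"
    using assms(1) by (auto simp: k_independent_def intro: card_mono)
  have fin: "finite {card S |S. k_independent V E k S}" using finite_subset[OF sub] by auto
  have "k_independent V E k {}" unfolding k_independent_def by simp
  then have ne: "{card S |S. k_independent V E k S} \<noteq> {}" by auto
  have "Max {card S |S. k_independent V E k S} \<in> {card S |S. k_independent V E k S}"
    using fin ne by (rule Max_in)
  then show ?thesis unfolding alpha_k_def by auto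
qed

lemma lower_elem:
  assumes sg: "simple_graph V E" and ne: "V \<noteq> {}" and avg: "avg_degree V E \<le> real d"
  shows "real (k + 1) / real (d + k + 1) \<le> real (alpha_k k V E) / real (card V)"
proof -
  have finV: "finite V" using sg simple_graph_def by auto
  obtain S where kS: "k_independent V E k S" and b:
    "real (k+1) * real (card V)^2 \<le> real (card S) * (2 * real (card E) + real (k+1) * real (card V))"
    using main_bound[OF finV sg] by blast
  define n where "n = real (card V)"
  define m where "m = real (card E)"
  define al where "al = real (alpha_k k V E)"
  define a where "a = real (k+1)"
  have npos: "n > 0" unfolding n_def using ne finV by (simp add: card_gt_0_iff)
  have apos: "a > 0" unfolding a_def by simp
  have sal: "real (card S) \<le> al" unfolding al_def using alpha_ge[OF finV kS] by simp
  have "2 * m / n \<le> real d" using avg unfolding avg_degree_def m_def n_def by simp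
  then have m2: "2 * m \<le> real d * n" using npos by (simp add: divide_le_eq)
  have mnn: "0 \<le> 2 * m + a * n" unfolding m_def using apos npos by simp
  have "a * n^2 \<le> real (card S) * (2*m + a*n)" using b unfolding a_def n_def m_def by simp
  also have "\<dots> \<le> al * (2*m + a*n)" using sal mnn by (rule mult_right_mono)
  also have "\<dots> \<le> al * ((real d + a) * n)"
    using m2 sal by (intro mult_left_mono) (auto simp: algebra_simps)
  finally have "a * n * n \<le> (al * (real d + a)) * n" by (simp add: power2_eq_square algebra_simps)
  then have "a * n \<le> al * (real d + a)" using npos by simp
  then have "a / (real d + a) \<le> al / n" using npos apos
    by (simp add: divide_le_eq le_divide_eq algebra_simps)
  moreover have "real (d + k + 1) = real d + a" unfolding a_def by simp
  ultimately show ?thesis unfolding a_def al_def n_def by (simp add: add.assoc add.left_commute)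
qed


lemma complete_alpha:
  assumes V: "V = {..d::nat}" and E: "E = {e. e \<subseteq> V \<and> card e = 2}"
  shows "alpha_k k V E \<le> k + 1"
proof -
  obtain S where kS: "k_independent V E k S" and al: "alpha_k k V E = card S"
    using alpha_in[of V E k] V by auto
  have SV: "S \<subseteq> V" using kS k_independent_def by auto
  have finS: "finite S" using SV V finite_subset by auto
  show ?thesis
  proof (cases "S = {}")
    case True then show ?thesis using al by simp
  next
    case False
    then obtain u where u: "u \<in> S" by auto
    have "{v\<in>S. {u,v}\<in>E} = S - {u}" using SV u unfolding E by (auto simp: card_2_iff)
    then have "card (S - {u}) \<le> k" using kS u unfolding k_independent_def by auto
    then show ?thesis using al u finS by (simp add: card_Diff_singleton)
  qed
qed

lemma upper_elem:
  "\<exists>V E. simple_graph V E \<and> V \<noteq> {} \<and> avg_degree V E \<le> real d \<and>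
     real (alpha_k k V E) / real (card V) \<le> real (k + 1) / real (d + 1)"
proof -
  define V where "V = {..d}"
  define E where "E = {e. e \<subseteq> V \<and> card e = 2}"
  have sg: "simple_graph V E" unfolding simple_graph_def V_def E_def by auto
  have cV: "card V = d + 1" unfolding V_def by simp
  have cE: "card E = (d+1) choose 2" unfolding E_def using n_subsets[of V 2] cV V_def by simp
  have "2 * ((d+1) choose 2) \<le> (d+1) * d" by (simp add: choose_two)
  then have "real (2 * ((d+1) choose 2)) \<le> real ((d+1) * d)" by (simp only: of_nat_le_iff)
  then have "2 * real (card E) \<le> real d * real (card V)" unfolding cE cV by (simp add: algebra_simps)
  then have avg: "avg_degree V E \<le> real d" unfolding avg_degree_def using cV
    by (simp add: divide_le_eq)
  have al: "alpha_k k V E \<le> k + 1" using complete_alpha V_def E_def by blast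
  have "real (alpha_k k V E) / real (card V) \<le> real (k + 1) / real (d + 1)"
    unfolding cV using al by (intro divide_right_mono) auto
  moreover have "V \<noteq> {}" unfolding V_def by auto
  ultimately show ?thesis using sg avg by blast
qed

theorem mainTheorem8:
  fixes k d :: nat
  assumes "k \<le> d"
  shows "real (k + 1) / real (d + k + 1) \<le> f_kd k d \<and>
         f_kd k d \<le> real (k + 1) / real (d + 1)"
proof -
  let ?X = "{real (alpha_k k V E) / real (card V) | V E.
                    simple_graph V E \<and> V \<noteq> {} \<and> avg_degree V E \<le> real d}"
  obtain V E where VE: "simple_graph V E" "V \<noteq> {}" "avg_degree V E \<le> real d"
    and le: "real (alpha_k k V E) / real (card V) \<le> real (k + 1) / real (d + 1)"
    using upper_elem by blast
  have mem: "real (alpha_k k V E) / real (card V) \<in> ?X" using VE by blast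
  have ne: "?X \<noteq> {}" using mem by blast
  have bdd: "bdd_below ?X" by (rule bdd_belowI[of _ 0]) auto
  have "Inf ?X \<le> real (alpha_k k V E) / real (card V)" using mem bdd by (rule cInf_lower)
  with le have up: "f_kd k d \<le> real (k + 1) / real (d + 1)" unfolding f_kd_def by linarith
  have low: "real (k + 1) / real (d + k + 1) \<le> f_kd k d"
    unfolding f_kd_def using ne
  proof (rule cInf_greatest)
    fix x assume "x \<in> ?X"
    then obtain V E where "simple_graph V E" "V \<noteq> {}" "avg_degree V E \<le> real d"
      "x = real (alpha_k k V E) / real (card V)" by blast
    then show "real (k + 1) / real (d + k + 1) \<le> x" using lower_elem by blast
  qed
  show ?thesis using up low by simp
qed

end
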